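(* Let $\Theta\subset\mathbb R^m$ be bounded and for each $n$ let $\{\Pi_n(\theta)\}_{\theta\in\Theta}$ be a family of $n\times n$ real matrices such that: (a) $M:=\sup_n\sup_{\theta\in\Theta}\|\Pi_n(\theta)\|_{op}<\infty$; (b) there is $C>0$ with $\|\Pi_n(\theta_2)-\Pi_n(\theta_1)\|_{op}\le C\|\theta_2-\theta_1\|_2$ for all $n$ and $\theta_1,\theta_2\in\Theta$; (c) for every $\theta\in\Theta$, $\|\Pi_n(\theta)\|_{op}/\|\Pi_n(\theta)\|_F=o(1/\sqrt{\ln n})$ as $n\to\infty$. Let $Z\in\mathbb R^n$ be a standard Gaussian vector. Then there is a constant $C'>0$ such that $$\lim_{n\to\infty}\Pr\Big(\sup_{\theta\in\Theta}\big|Z^\top\Pi_n(\theta)Z-\operatorname{tr}\Pi_n(\theta)\big|\ge C'\sqrt{n\ln n}\Big)=0.$$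
   Context: $\|\cdot\|_{op}$ denotes the spectral norm and $\|\cdot\|_F$ the Frobenius norm. *)

theory Defs
  imports "HOL-Probability.Probability" "HOL-Library.Landau_Symbols"
begin

text \<open>An n x n real matrix is represented as a function A :: nat => nat => real,
  of which only the entries A i j with i, j < n are relevant; vectors of R^n are
  functions nat => real of which only the coordinates j < n are relevant.\<close>

definition mat_vec_norm :: "nat \<Rightarrow> (nat \<Rightarrow> nat \<Rightarrow> real) \<Rightarrow> (nat \<Rightarrow> real) \<Rightarrow> real" where
  "mat_vec_norm n A x = sqrt (\<Sum>i<n. (\<Sum>j<n. A i j * x j)\<^sup>2)"

definition op_norm :: "nat \<Rightarrow> (nat \<Rightarrow> nat \<Rightarrow> real) \<Rightarrow> real" where
  "op_norm n A = Sup {mat_vec_norm n A x | x. (\<Sum>j<n. (x j)\<^sup>2) \<le> 1}"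

definition frob_norm :: "nat \<Rightarrow> (nat \<Rightarrow> nat \<Rightarrow> real) \<Rightarrow> real" where
  "frob_norm n A = sqrt (\<Sum>i<n. \<Sum>j<n. (A i j)\<^sup>2)"

definition mat_trace :: "nat \<Rightarrow> (nat \<Rightarrow> nat \<Rightarrow> real) \<Rightarrow> real" where
  "mat_trace n A = (\<Sum>i<n. A i i)"

definition quad_form :: "nat \<Rightarrow> (nat \<Rightarrow> nat \<Rightarrow> real) \<Rightarrow> (nat \<Rightarrow> real) \<Rightarrow> real" where
  "quad_form n A z = (\<Sum>i<n. \<Sum>j<n. z i * A i j * z j)"

definition std_gauss_vec :: "nat \<Rightarrow> (nat \<Rightarrow> real) measure" where
  "std_gauss_vec n = PiM {..<n} (\<lambda>_. density lborel std_normal_density)"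

end

theory Submission
  imports Defs
begin

abbreviation N1 :: "real measure" where "N1 \<equiv> density lborel std_normal_density"

lemma prob_N1: "prob_space N1"
  using prob_space_normal_density by simp

lemma prob_gauss: "prob_space (std_gauss_vec n)"
  unfolding std_gauss_vec_def
  by (rule prob_space_PiM) (simp add: prob_N1)

lemma psf_N1: "product_sigma_finite (\<lambda>_::nat. N1)"
proof -
  interpret prob_space N1 by (rule prob_N1)
  show ?thesis by unfold_locales
qed

lemma nn_normal_density: "\<sigma> > 0 \<Longrightarrow> (\<integral>\<^sup>+x. ennreal (normal_density \<mu> \<sigma> x) \<partial>lborel) = 1"
proof -
  assume "\<sigma> > 0"
  interpret prob_space "density lborel (normal_density \<mu> \<sigma>)" by (rule prob_space_normal_density) fact
  have "emeasure (density lborel (normal_density \<mu> \<sigma>)) UNIV = 1"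
    using emeasure_space_1 by simp
  thus ?thesis by (simp add: emeasure_density)
qed

lemma gauss1d:
  fixes a w :: real
  assumes a: "a < 1"
  shows "(\<integral>\<^sup>+y. ennreal (exp (a * y\<^sup>2 / 2 + w * y)) \<partial>N1)
       = ennreal (exp (w\<^sup>2 / (2 * (1 - a))) / sqrt (1 - a))"
proof -
  define s where "s = 1 - a"
  have s: "s > 0" using a by (simp add: s_def)
  define K where "K = exp (w\<^sup>2 / (2 * s)) / sqrt s"
  have K: "K \<ge> 0" using s by (simp add: K_def)
  have pt: "std_normal_density y * exp (a * y\<^sup>2 / 2 + w * y)
      = K * normal_density (w / s) (1 / sqrt s) y" for y
  proof -
    have e: "exp (- y\<^sup>2 / 2) * exp (a * y\<^sup>2 / 2 + w * y)
       = exp (w\<^sup>2 / (2 * s)) * exp (-(y - w / s)\<^sup>2 / (2 * (1 / sqrt s)\<^sup>2))"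
    proof -
      have as: "a = 1 - s" by (simp add: s_def)
      have q: "(1 / sqrt s)\<^sup>2 = 1 / s" using s by (simp add: power_divide)
      have "- y\<^sup>2 / 2 + (a * y\<^sup>2 / 2 + w * y) = w\<^sup>2 / (2 * s) + (-(y - w / s)\<^sup>2 / (2 * (1 / sqrt s)\<^sup>2))"
        unfolding q as using s by (simp add: power2_eq_square field_simps)
      thus ?thesis unfolding exp_add[symmetric] by simp
    qed
    have "sqrt (2 * pi * (1 / sqrt s)\<^sup>2) = sqrt (2 * pi) / sqrt s"
      using s by (simp add: real_sqrt_divide real_sqrt_mult power_divide)
    then show ?thesis
      unfolding normal_density_def K_def std_normal_density_def
      using e s by (simp add: field_simps)
  qed
  have "(\<integral>\<^sup>+y. ennreal (exp (a * y\<^sup>2 / 2 + w * y)) \<partial>N1)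
      = (\<integral>\<^sup>+y. ennreal (std_normal_density y) * ennreal (exp (a * y\<^sup>2 / 2 + w * y)) \<partial>lborel)"
    by (subst nn_integral_density) auto
  also have "\<dots> = (\<integral>\<^sup>+y. ennreal K * ennreal (normal_density (w / s) (1 / sqrt s) y) \<partial>lborel)"
    by (intro nn_integral_cong) (simp add: ennreal_mult'[symmetric] pt K)
  also have "\<dots> = ennreal K"
    by (subst nn_integral_cmult) (auto simp: nn_normal_density s)
  finally show ?thesis by (simp add: K_def s_def)
qed


definition symm :: "nat \<Rightarrow> (nat \<Rightarrow> nat \<Rightarrow> real) \<Rightarrow> bool" where
  "symm n X \<longleftrightarrow> (\<forall>i<n. \<forall>j<n. X i j = X j i)"
definition fro2 :: "nat \<Rightarrow> (nat \<Rightarrow> nat \<Rightarrow> real) \<Rightarrow> real" where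
  "fro2 n X = (\<Sum>i<n. \<Sum>j<n. (X i j)\<^sup>2)"
definition vsq :: "nat \<Rightarrow> (nat \<Rightarrow> real) \<Rightarrow> real" where
  "vsq n u = (\<Sum>j<n. (u j)\<^sup>2)"

lemma quad_form_cong: "(\<And>i. i < n \<Longrightarrow> u i = v i) \<Longrightarrow> quad_form n X u = quad_form n X v"
  unfolding quad_form_def by (intro sum.cong refl) auto

lemma quad_form_Suc:
  assumes "symm (Suc n) X"
  shows "quad_form (Suc n) X z = quad_form n X z + 2 * z n * (\<Sum>i<n. X n i * z i) + X n n * (z n)\<^sup>2"
proof -
  have s: "(\<Sum>i<n. z i * X i n * z n) = z n * (\<Sum>i<n. X n i * z i)"
    unfolding sum_distrib_left using assms unfolding symm_def
    by (intro sum.cong refl) (auto simp: mult_ac)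
  have s2: "(\<Sum>j<n. z n * X n j * z j) = z n * (\<Sum>i<n. X n i * z i)"
    unfolding sum_distrib_left by (intro sum.cong refl) (auto simp: mult_ac)
  have "quad_form (Suc n) X z = (\<Sum>i<n. \<Sum>j<n. z i * X i j * z j) + (\<Sum>i<n. z i * X i n * z n)
     + ((\<Sum>j<n. z n * X n j * z j) + z n * X n n * z n)"
    by (simp add: quad_form_def sum.distrib)
  also have "\<dots> = quad_form n X z + 2 * z n * (\<Sum>i<n. X n i * z i) + X n n * (z n)\<^sup>2"
    unfolding s s2 quad_form_def by (simp add: power2_eq_square algebra_simps)
  finally show ?thesis .
qed

lemma quad_form_ext:
  assumes "symm (Suc n) X"
  shows "quad_form (Suc n) X (\<lambda>i. if i < n then u i else t)
     = quad_form n X u + 2 * t * (\<Sum>i<n. X n i * u i) + X n n * t\<^sup>2"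
proof -
  have "quad_form n X (\<lambda>i. if i < n then u i else t) = quad_form n X u"
    by (rule quad_form_cong) simp
  then show ?thesis unfolding quad_form_Suc[OF assms] by simp
qed

lemma vsq_ext: "vsq (Suc n) (\<lambda>i. if i < n then u i else t) = vsq n u + t\<^sup>2"
  unfolding vsq_def by (simp add: sum.lessThan_Suc)

lemma quad_form_Y:
  "quad_form n (\<lambda>i j. X i j + v i * v j / s) u = quad_form n X u + (\<Sum>i<n. v i * u i)\<^sup>2 / s"
proof -
  have "(\<Sum>i<n. v i * u i)\<^sup>2 / s = (\<Sum>i<n. \<Sum>j<n. u i * (v i * v j / s) * u j)"
    unfolding power2_eq_square sum_product sum_divide_distrib
    by (intro sum.cong refl) (simp add: field_simps)
  thus ?thesis unfolding quad_form_def
    by (simp add: distrib_left distrib_right sum.distrib)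
qed

lemma fro2_Suc:
  assumes "symm (Suc n) X"
  shows "fro2 (Suc n) X = fro2 n X + 2 * vsq n (\<lambda>i. X n i) + (X n n)\<^sup>2"
proof -
  have "(\<Sum>i<n. (X i n)\<^sup>2) = vsq n (\<lambda>i. X n i)"
    unfolding vsq_def using assms unfolding symm_def by (intro sum.cong refl) auto
  thus ?thesis unfolding fro2_def vsq_def
    by (simp add: sum.lessThan_Suc sum.distrib)
qed

lemma fro2_Y:
  "fro2 n (\<lambda>i j. X i j + v i * v j / s)
     = fro2 n X + 2 * quad_form n X v / s + (vsq n v)\<^sup>2 / s\<^sup>2"
proof -
  have a: "(\<Sum>i<n. \<Sum>j<n. 2 * (X i j * (v i * v j / s))) = 2 * quad_form n X v / s"
    unfolding quad_form_def sum_distrib_left sum_divide_distrib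
    by (intro sum.cong refl) (simp add: field_simps)
  have b: "(\<Sum>i<n. \<Sum>j<n. (v i * v j / s)\<^sup>2) = (vsq n v)\<^sup>2 / s\<^sup>2"
    unfolding vsq_def power2_eq_square sum_product sum_divide_distrib
    by (intro sum.cong refl) (simp add: field_simps)
  have "fro2 n (\<lambda>i j. X i j + v i * v j / s)
     = (\<Sum>i<n. \<Sum>j<n. (X i j)\<^sup>2 + 2 * (X i j * (v i * v j / s)) + (v i * v j / s)\<^sup>2)"
    unfolding fro2_def by (intro sum.cong refl) (simp add: power2_sum)
  also have "\<dots> = fro2 n X + 2 * quad_form n X v / s + (vsq n v)\<^sup>2 / s\<^sup>2"
    unfolding sum.distrib fro2_def a b ..
  finally show ?thesis .
qed

lemma trace_Y: "mat_trace n (\<lambda>i j. X i j + v i * v j / s) = mat_trace n X + vsq n v / s"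
  unfolding mat_trace_def vsq_def by (simp add: sum.distrib sum_divide_distrib power2_eq_square)

lemma trace_Suc: "mat_trace (Suc n) X = mat_trace n X + X n n"
  unfolding mat_trace_def by simp

lemma ln_part:
  fixes a :: real assumes "\<bar>a\<bar> \<le> 1/4"
  shows "- ln (1 - a) / 2 - a / 2 \<le> a\<^sup>2"
proof (cases "a \<ge> 0")
  case True
  have "- a - 2 * a\<^sup>2 \<le> ln (1 - a)" by (rule ln_one_minus_pos_lower_bound) (use True assms in auto)
  thus ?thesis by linarith
next
  case False
  have "(-a) - (-a)\<^sup>2 \<le> ln (1 + (-a))" by (rule ln_one_plus_pos_lower_bound) (use False assms in auto)
  then have "- a - a * a \<le> ln (1 - a)" by (simp add: power2_eq_square)
  moreover have "0 \<le> a * a" by simp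
  ultimately show ?thesis unfolding power2_eq_square by linarith
qed

lemma lin_comb: fixes u p w A L a a2 T F :: real
  shows "u/2 + p + w \<le> 2*A \<Longrightarrow> -L/2 - a/2 \<le> a2 \<Longrightarrow> -L/2 + (T+u)/2 + (F + p + w) \<le> (T+a)/2 + (F + 2*A + a2)"
  by (simp add: field_simps)

lemma key_ineq:
  fixes a q A T F :: real
  assumes a: "\<bar>a\<bar> \<le> 1/4" and q: "\<bar>q\<bar> \<le> A/4" and A: "0 \<le> A" "A \<le> 1/3"
  shows "- ln (1 - a) / 2 + (T + A / (1 - a)) / 2 + (F + 2 * q / (1 - a) + A\<^sup>2 / (1 - a)\<^sup>2)
     \<le> (T + a) / 2 + (F + 2 * A + a\<^sup>2)"
proof -
  define s where "s = 1 - a"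
  have s: "3/4 \<le> s" "s \<le> 5/4" using a by (auto simp: s_def)
  have l: "- ln (1 - a) / 2 - a / 2 \<le> a\<^sup>2" by (rule ln_part[OF a])
  have m: "A * s / 2 + 2 * q * s + A\<^sup>2 \<le> 2 * A * s\<^sup>2"
  proof -
    have "2 * q * s \<le> A / 4 * 2 * s" using q s by (intro mult_right_mono) auto
    moreover have "A\<^sup>2 \<le> A * (1/3)" unfolding power2_eq_square using A by (intro mult_left_mono) auto
    moreover have "A * (s + 1/3) \<le> A * (2 * s\<^sup>2)"
      proof (intro mult_left_mono)
      have "3/4 * s \<le> s * s" using s by (intro mult_right_mono) auto
      then show "s + 1/3 \<le> 2 * s\<^sup>2" unfolding power2_eq_square using s by linarith
    qed (use A in auto)
    ultimately show ?thesis by (simp add: algebra_simps power2_eq_square)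
  qed
  have "A / s / 2 + 2 * q / s + A\<^sup>2 / s\<^sup>2 \<le> 2 * A"
  proof -
    have "A / s / 2 + 2 * q / s + A\<^sup>2 / s\<^sup>2 = (A * s / 2 + 2 * q * s + A\<^sup>2) / s\<^sup>2"
      using s by (simp add: field_simps power2_eq_square)
    also have "\<dots> \<le> 2 * A * s\<^sup>2 / s\<^sup>2" using m s by (intro divide_right_mono) auto
    also have "\<dots> = 2 * A" using s by simp
    finally show ?thesis .
  qed
  then show ?thesis using l unfolding s_def by (rule lin_comb)
qed

lemma comp_meas: "j \<in> I \<Longrightarrow> (\<lambda>x. x j) \<in> borel_measurable (PiM I (\<lambda>_. N1))"
proof -
  assume j: "j \<in> I"
  have e: "measurable (PiM I (\<lambda>_. N1)) N1 = borel_measurable (PiM I (\<lambda>_. N1))"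
    by (rule measurable_cong_sets) simp_all
  show ?thesis using measurable_component_singleton[OF j, of "\<lambda>_. N1"] unfolding e .
qed

lemma quad_meas: "{..<n} \<subseteq> I \<Longrightarrow> (\<lambda>g. quad_form n X g) \<in> borel_measurable (PiM I (\<lambda>_. N1))"
  unfolding quad_form_def
  by (intro borel_measurable_sum borel_measurable_times comp_meas borel_measurable_const) auto

lemma exp_half_ln: "s > 0 \<Longrightarrow> exp (- ln s / 2) = 1 / sqrt s"
proof -
  assume s: "s > 0"
  have "sqrt s = s powr (1/2)" using s by (simp add: powr_half_sqrt)
  also have "\<dots> = exp (ln s / 2)" using s by (simp add: powr_def)
  finally show ?thesis by (simp add: exp_minus inverse_eq_divide)
qed

lemma inner_alg: "s > 0 \<Longrightarrow>
  exp (Q / 2) * (exp (w\<^sup>2 / (2 * s)) / sqrt s) = 1 / sqrt s * exp ((Q + w\<^sup>2 / s) / 2)"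
proof -
  assume "s > 0"
  have e: "(Q + w\<^sup>2 / s) / 2 = Q / 2 + w\<^sup>2 / (2 * s)" by (simp add: add_divide_distrib)
  have "exp (Q / 2) * (exp (w\<^sup>2 / (2 * s)) / sqrt s) = 1 / sqrt s * (exp (Q / 2) * exp (w\<^sup>2 / (2 * s)))"
    by simp
  also have "exp (Q / 2) * exp (w\<^sup>2 / (2 * s)) = exp ((Q + w\<^sup>2 / s) / 2)"
    unfolding e exp_add ..
  finally show ?thesis .
qed

lemma Y_upper_alg:
  fixes s a w qx V :: real
  assumes s: "s > 0" "s = 1 - a"
    and up: "qx + (2 * (w / s) * w + a * (w / s)\<^sup>2) \<le> (V + (w / s)\<^sup>2) / 4"
  shows "qx + w\<^sup>2 / s \<le> V / 4"
proof -
  have e: "2 * (w / s) * w + a * (w / s)\<^sup>2 = w\<^sup>2 / s + w\<^sup>2 / s\<^sup>2"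
  proof -
    have as: "a = 1 - s" using s by simp
    have "a * (w / s)\<^sup>2 = w\<^sup>2 / s\<^sup>2 - w\<^sup>2 / s"
      unfolding as using s by (simp add: power2_eq_square field_simps)
    moreover have "2 * (w / s) * w = 2 * (w\<^sup>2 / s)" by (simp add: power2_eq_square)
    ultimately show ?thesis by simp
  qed
  have f0: "0 \<le> w\<^sup>2 / s\<^sup>2" by simp
  have gen: "\<And>x::real. 0 \<le> x \<Longrightarrow> x/4 \<le> x" by simp
  have f: "(w / s)\<^sup>2 / 4 \<le> w\<^sup>2 / s\<^sup>2" using gen[OF f0] by (simp add: power_divide)
  have lin2: "\<And>qx E V F a1 a2::real. qx + E \<le> (V + F)/4 \<Longrightarrow> E = a1 + a2 \<Longrightarrow> F/4 \<le> a2 \<Longrightarrow> qx + a1 \<le> V/4"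
    by (simp add: field_simps)
  show ?thesis by (rule lin2[OF up e f])
qed

lemma exp_meas: "f \<in> borel_measurable M \<Longrightarrow> (\<lambda>x. ennreal (exp (f x / 2))) \<in> borel_measurable M"
proof -
  assume f: "f \<in> borel_measurable M"
  have "(\<lambda>x. f x / 2) \<in> borel_measurable M" by (rule borel_measurable_divide[OF f]) simp
  then have "(\<lambda>x. exp (f x / 2)) \<in> borel_measurable M" by (rule measurable_compose[OF _ borel_measurable_exp])
  then show ?thesis by (rule measurable_compose[OF _ measurable_ennreal])
qed

lemma mgf_core:
  "symm n X \<Longrightarrow> (\<forall>u. \<bar>quad_form n X u\<bar> \<le> vsq n u / 4) \<Longrightarrow>
   (\<integral>\<^sup>+g. ennreal (exp (quad_form n X g / 2)) \<partial>std_gauss_vec n)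
     \<le> ennreal (exp (mat_trace n X / 2 + fro2 n X))"
proof (induction n arbitrary: X)
  case 0
  show ?case unfolding std_gauss_vec_def
    by (simp add: quad_form_def mat_trace_def fro2_def PiM_empty lessThan_0)
next
  case (Suc n X)
  note sym = Suc.prems(1) and H = Suc.prems(2)
  define a where "a = X n n"
  define v where "v = (\<lambda>i. X n i)"
  define s where "s = 1 - a"
  define A where "A = vsq n v"
  define q where "q = quad_form n X v"
  have H': "\<bar>quad_form n X u + 2 * t * (\<Sum>i<n. v i * u i) + a * t\<^sup>2\<bar> \<le> (vsq n u + t\<^sup>2) / 4" for u t
    using H[rule_format, of "\<lambda>i. if i < n then u i else t"]
    unfolding quad_form_ext[OF sym] vsq_ext by (simp add: a_def v_def)
  have ha: "\<bar>a\<bar> \<le> 1/4"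
    using H'[of "\<lambda>_. 0" 1] by (simp add: quad_form_def vsq_def)
  have A0: "0 \<le> A" unfolding A_def vsq_def by (simp add: sum_nonneg)
  have vv: "(\<Sum>i<n. v i * v i) = A" unfolding A_def vsq_def by (simp add: power2_eq_square)
  have hq: "\<bar>q\<bar> \<le> A / 4"
    using H'[of v 0] unfolding q_def A_def by simp
  have h1: "\<bar>q + 2 * A + a\<bar> \<le> (A + 1) / 4"
    using H'[of v 1] unfolding q_def[symmetric] vv A_def[symmetric] by simp
  have e1: "q + 2*A + a \<le> (A+1)/4" using abs_le_D1[OF h1] by simp
  have e2: "-q \<le> A/4" using abs_le_D2[OF hq] by simp
  have e3: "-a \<le> 1/4" using abs_le_D2[OF ha] by simp
  have hA: "A \<le> 1/3" using e1 e2 e3 by (simp add: field_simps)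
  have s: "3/4 \<le> s" "s \<le> 5/4" using ha by (auto simp: s_def)
  have s0: "s > 0" using s by simp
  define Y where "Y = (\<lambda>i j. X i j + v i * v j / s)"
  have symY: "symm n Y" using sym unfolding symm_def Y_def by (auto simp: mult.commute)
  have HY: "\<forall>u. \<bar>quad_form n Y u\<bar> \<le> vsq n u / 4"
  proof
    fix u
    define w where "w = (\<Sum>i<n. v i * u i)"
    have qY: "quad_form n Y u = quad_form n X u + w\<^sup>2 / s"
      unfolding Y_def w_def by (rule quad_form_Y)
    have lo: "- (vsq n u / 4) \<le> quad_form n X u" using abs_le_D2[OF H'[of u 0]] by simp
    have up: "quad_form n X u + (2 * (w / s) * w + a * (w / s)\<^sup>2) \<le> (vsq n u + (w / s)\<^sup>2) / 4"
      using abs_le_D1[OF H'[of u "w / s"]] unfolding w_def by (simp add: add.assoc)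
    have "quad_form n Y u \<le> vsq n u / 4" unfolding qY
      by (rule Y_upper_alg[OF s0 s_def up])
    moreover have "0 \<le> w\<^sup>2 / s" using s by simp
    ultimately show "\<bar>quad_form n Y u\<bar> \<le> vsq n u / 4" using lo qY by linarith
  qed
  have IH: "(\<integral>\<^sup>+g. ennreal (exp (quad_form n Y g / 2)) \<partial>std_gauss_vec n)
     \<le> ennreal (exp (mat_trace n Y / 2 + fro2 n Y))"
    by (rule Suc.IH[OF symY HY])
  interpret P: product_sigma_finite "\<lambda>_::nat. N1" by (rule psf_N1)
  have decomp: "quad_form (Suc n) X (x(n := y)) / 2 = quad_form n X x / 2 + (a * y\<^sup>2 / 2 + (\<Sum>i<n. v i * x i) * y)" for x y
  proof -
    have "quad_form n X (x(n := y)) = quad_form n X x" by (rule quad_form_cong) auto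
    moreover have "(\<Sum>i<n. X n i * (x(n := y)) i) = (\<Sum>i<n. v i * x i)"
      unfolding v_def by (intro sum.cong) auto
    ultimately show ?thesis unfolding quad_form_Suc[OF sym] by (simp add: a_def add_divide_distrib)
  qed
  have inner: "(\<integral>\<^sup>+y. ennreal (exp (quad_form (Suc n) X (x(n := y)) / 2)) \<partial>N1)
      = ennreal (1 / sqrt s) * ennreal (exp (quad_form n Y x / 2))" for x
  proof -
    have "(\<integral>\<^sup>+y. ennreal (exp (quad_form (Suc n) X (x(n := y)) / 2)) \<partial>N1)
       = (\<integral>\<^sup>+y. ennreal (exp (quad_form n X x / 2)) * ennreal (exp (a * y\<^sup>2 / 2 + (\<Sum>i<n. v i * x i) * y)) \<partial>N1)"
      unfolding decomp exp_add by (simp add: ennreal_mult)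
    also have "\<dots> = ennreal (exp (quad_form n X x / 2)) * ennreal (exp ((\<Sum>i<n. v i * x i)\<^sup>2 / (2 * s)) / sqrt s)"
      unfolding s_def using ha by (subst nn_integral_cmult) (auto simp: gauss1d)
    also have "\<dots> = ennreal (exp (quad_form n X x / 2) * (exp ((\<Sum>i<n. v i * x i)\<^sup>2 / (2 * s)) / sqrt s))"
      by (rule ennreal_mult[symmetric]) (use s0 in auto)
    also have "\<dots> = ennreal (1 / sqrt s * exp (quad_form n Y x / 2))"
      unfolding inner_alg[OF s0] Y_def quad_form_Y ..
    also have "\<dots> = ennreal (1 / sqrt s) * ennreal (exp (quad_form n Y x / 2))"
      by (rule ennreal_mult) (use s0 in auto)
    finally show ?thesis .
  qed
  have "(\<integral>\<^sup>+g. ennreal (exp (quad_form (Suc n) X g / 2)) \<partial>std_gauss_vec (Suc n))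
     = (\<integral>\<^sup>+x. (\<integral>\<^sup>+y. ennreal (exp (quad_form (Suc n) X (x(n := y)) / 2)) \<partial>N1) \<partial>std_gauss_vec n)"
    unfolding std_gauss_vec_def lessThan_Suc
  proof (rule P.product_nn_integral_insert)
    show "(\<lambda>g. ennreal (exp (quad_form (Suc n) X g / 2))) \<in> borel_measurable (Pi\<^sub>M (insert n {..<n}) (\<lambda>_. N1))"
      by (rule exp_meas, rule quad_meas) auto
  qed auto
  also have "\<dots> = ennreal (1 / sqrt s) * (\<integral>\<^sup>+x. ennreal (exp (quad_form n Y x / 2)) \<partial>std_gauss_vec n)"
  proof -
    have "(\<lambda>g. ennreal (exp (quad_form n Y g / 2))) \<in> borel_measurable (Pi\<^sub>M {..<n} (\<lambda>_. N1))"
      by (rule exp_meas, rule quad_meas) auto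
    then show ?thesis unfolding inner by (intro nn_integral_cmult) (simp add: std_gauss_vec_def)
  qed
  also have "\<dots> \<le> ennreal (1 / sqrt s) * ennreal (exp (mat_trace n Y / 2 + fro2 n Y))"
    by (rule mult_left_mono[OF IH]) simp
  also have "\<dots> = ennreal (exp (- ln s / 2 + (mat_trace n Y / 2 + fro2 n Y)))"
    unfolding exp_add exp_half_ln[OF s0] by (rule ennreal_mult[symmetric]) (use s0 in auto)
  also have "\<dots> \<le> ennreal (exp (mat_trace (Suc n) X / 2 + fro2 (Suc n) X))"
  proof -
    have k: "- ln (1 - a) / 2 + (mat_trace n X + A / (1 - a)) / 2 + (fro2 n X + 2 * q / (1 - a) + A\<^sup>2 / (1 - a)\<^sup>2)
     \<le> (mat_trace n X + a) / 2 + (fro2 n X + 2 * A + a\<^sup>2)"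
      by (rule key_ineq[OF ha hq A0 hA])
    have "- ln s / 2 + (mat_trace n Y / 2 + fro2 n Y) \<le> mat_trace (Suc n) X / 2 + fro2 (Suc n) X"
    proof -
      have tY: "mat_trace n Y = mat_trace n X + A/s" unfolding Y_def trace_Y A_def ..
      have fY: "fro2 n Y = fro2 n X + 2*q/s + A\<^sup>2/s\<^sup>2" unfolding Y_def fro2_Y q_def A_def ..
      have tX: "mat_trace (Suc n) X = mat_trace n X + a" unfolding trace_Suc a_def ..
      have fX: "fro2 (Suc n) X = fro2 n X + 2*A + a\<^sup>2" unfolding fro2_Suc[OF sym] A_def a_def v_def ..
      show ?thesis using k unfolding tY fY tX fX s_def by (simp only: add.assoc)
    qed
    then show ?thesis by simp
  qed
  finally show ?case .
qed


lemma vsq_nonneg: "0 \<le> vsq n u" unfolding vsq_def by (simp add: sum_nonneg)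

lemma mvn_sq: "(mat_vec_norm n A x)\<^sup>2 = (\<Sum>i<n. (\<Sum>j<n. A i j * x j)\<^sup>2)"
  unfolding mat_vec_norm_def by (simp add: sum_nonneg)

lemma mvn_nonneg: "0 \<le> mat_vec_norm n A x" unfolding mat_vec_norm_def by (simp add: sum_nonneg)

lemma mvn_frob: "mat_vec_norm n A x \<le> frob_norm n A * sqrt (vsq n x)"
proof -
  have "(\<Sum>i<n. (\<Sum>j<n. A i j * x j)\<^sup>2) \<le> (\<Sum>i<n. (\<Sum>j<n. (A i j)\<^sup>2) * vsq n x)"
    unfolding vsq_def by (intro sum_mono Cauchy_Schwarz_ineq_sum)
  also have "\<dots> = (\<Sum>i<n. \<Sum>j<n. (A i j)\<^sup>2) * vsq n x" by (simp add: sum_distrib_right)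
  finally have "sqrt (\<Sum>i<n. (\<Sum>j<n. A i j * x j)\<^sup>2) \<le> sqrt ((\<Sum>i<n. \<Sum>j<n. (A i j)\<^sup>2) * vsq n x)"
    by (rule real_sqrt_le_mono)
  then show ?thesis unfolding mat_vec_norm_def frob_norm_def by (simp add: real_sqrt_mult)
qed

lemma op_norm_set_bdd: "bdd_above {mat_vec_norm n A x | x. (\<Sum>j<n. (x j)\<^sup>2) \<le> 1}"
proof (rule bdd_aboveI)
  fix y assume "y \<in> {mat_vec_norm n A x | x. (\<Sum>j<n. (x j)\<^sup>2) \<le> 1}"
  then obtain x where y: "y = mat_vec_norm n A x" and x: "vsq n x \<le> 1" unfolding vsq_def by auto
  have "y \<le> frob_norm n A * sqrt (vsq n x)" using mvn_frob y by simp
  also have "\<dots> \<le> frob_norm n A * 1"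
    using x vsq_nonneg[of n x] by (intro mult_left_mono) (auto simp: frob_norm_def sum_nonneg)
  finally show "y \<le> frob_norm n A" by simp
qed

lemma op_norm_upper: "vsq n x \<le> 1 \<Longrightarrow> mat_vec_norm n A x \<le> op_norm n A"
  unfolding op_norm_def using op_norm_set_bdd
  by (intro cSup_upper) (auto simp: vsq_def)

lemma op_norm_nonneg: "0 \<le> op_norm n A"
  using op_norm_upper[of n "\<lambda>_. 0" A] mvn_nonneg[of n A "\<lambda>_. 0"] by (simp add: vsq_def)

lemma mvn_scale: "mat_vec_norm n A (\<lambda>j. c * x j) = \<bar>c\<bar> * mat_vec_norm n A x"
proof -
  have "(\<Sum>i<n. (\<Sum>j<n. A i j * (c * x j))\<^sup>2) = c\<^sup>2 * (\<Sum>i<n. (\<Sum>j<n. A i j * x j)\<^sup>2)"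
    by (simp add: sum_distrib_left[symmetric] power_mult_distrib mult_ac)
  then show ?thesis unfolding mat_vec_norm_def by (simp add: real_sqrt_mult)
qed

lemma vsq_scale: "vsq n (\<lambda>j. c * x j) = c\<^sup>2 * vsq n x"
  unfolding vsq_def by (simp add: sum_distrib_left power_mult_distrib)

lemma mvn_op: "mat_vec_norm n A x \<le> op_norm n A * sqrt (vsq n x)"
proof (cases "vsq n x = 0")
  case True
  have "\<forall>j<n. x j = 0" using True unfolding vsq_def by (subst (asm) sum_nonneg_eq_0_iff) auto
  then have "mat_vec_norm n A x = 0" unfolding mat_vec_norm_def by simp
  then show ?thesis using True by simp
next
  case False
  define r where "r = sqrt (vsq n x)"
  have r: "r > 0" using False vsq_nonneg[of n x] by (simp add: r_def)
  have "vsq n (\<lambda>j. (1 / r) * x j) = 1"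
    unfolding vsq_scale r_def using r vsq_nonneg[of n x] by (simp add: power_divide r_def)
  then have "mat_vec_norm n A (\<lambda>j. (1 / r) * x j) \<le> op_norm n A" by (intro op_norm_upper) simp
  then have "mat_vec_norm n A x / r \<le> op_norm n A" unfolding mvn_scale using r by simp
  then show ?thesis using r by (simp add: r_def[symmetric] pos_divide_le_eq)
qed

lemma quad_form_alt: "quad_form n A u = (\<Sum>i<n. u i * (\<Sum>j<n. A i j * u j))"
  unfolding quad_form_def by (simp add: sum_distrib_left mult_ac)

lemma quad_op: "\<bar>quad_form n A u\<bar> \<le> op_norm n A * vsq n u"
proof -
  have "(quad_form n A u)\<^sup>2 \<le> vsq n u * (\<Sum>i<n. (\<Sum>j<n. A i j * u j)\<^sup>2)"
    unfolding quad_form_alt vsq_def by (rule Cauchy_Schwarz_ineq_sum)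
  also have "\<dots> = vsq n u * (mat_vec_norm n A u)\<^sup>2" by (simp add: mvn_sq)
  also have "\<dots> \<le> vsq n u * (op_norm n A * sqrt (vsq n u))\<^sup>2"
    by (rule mult_left_mono[OF power_mono[OF mvn_op mvn_nonneg] vsq_nonneg])
  also have "\<dots> = (op_norm n A * vsq n u)\<^sup>2"
    using vsq_nonneg[of n u] by (simp add: power_mult_distrib power2_eq_square)
  finally have "\<bar>quad_form n A u\<bar> \<le> \<bar>op_norm n A * vsq n u\<bar>" by (simp only: abs_le_square_iff)
  then show ?thesis
    using op_norm_nonneg[of n A] vsq_nonneg[of n u] by simp
qed

lemma fro2_op: "fro2 n A \<le> real n * (op_norm n A)\<^sup>2"
proof -
  define e where "e = (\<lambda>(k::nat) (j::nat). if j = k then 1 else (0::real))"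
  have ve: "k < n \<Longrightarrow> vsq n (e k) = 1" for k unfolding vsq_def e_def
    by (simp add: if_distrib[of "\<lambda>x. x\<^sup>2"] sum.delta cong: if_cong)
  have me: "k < n \<Longrightarrow> (mat_vec_norm n A (e k))\<^sup>2 = (\<Sum>i<n. (A i k)\<^sup>2)" for k
    unfolding mvn_sq e_def by (simp add: if_distrib[of "\<lambda>x. _ * x"] sum.delta cong: if_cong)
  have "fro2 n A = (\<Sum>k<n. \<Sum>i<n. (A i k)\<^sup>2)" unfolding fro2_def by (rule sum.swap)
  also have "\<dots> = (\<Sum>k<n. (mat_vec_norm n A (e k))\<^sup>2)" by (intro sum.cong) (auto simp: me)
  also have "\<dots> \<le> (\<Sum>k<n. (op_norm n A)\<^sup>2)"
    by (intro sum_mono power_mono[OF op_norm_upper mvn_nonneg]) (simp add: ve)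
  also have "\<dots> = real n * (op_norm n A)\<^sup>2" by simp
  finally show ?thesis .
qed

lemma trace_op: "\<bar>mat_trace n A\<bar> \<le> real n * op_norm n A"
proof -
  define e where "e = (\<lambda>(k::nat) (j::nat). if j = k then 1 else (0::real))"
  have ve: "k < n \<Longrightarrow> vsq n (e k) = 1" for k unfolding vsq_def e_def
    by (simp add: if_distrib[of "\<lambda>x. x\<^sup>2"] sum.delta cong: if_cong)
  have qe: "k < n \<Longrightarrow> quad_form n A (e k) = A k k" for k
    unfolding quad_form_def e_def by (simp add: if_distrib[of "\<lambda>x. _ * x"] if_distrib[of "\<lambda>x. x * _"] sum.delta cong: if_cong)
  have "\<bar>mat_trace n A\<bar> \<le> (\<Sum>k<n. \<bar>A k k\<bar>)" unfolding mat_trace_def by (rule sum_abs)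
  also have "\<dots> \<le> (\<Sum>k<n. op_norm n A)"
    by (intro sum_mono) (metis qe ve quad_op lessThan_iff mult_1_right)
  finally show ?thesis by simp
qed


lemma quad_form_transpose: "quad_form n (\<lambda>i j. A j i) z = quad_form n A z"
  unfolding quad_form_def by (subst sum.swap) (simp add: mult_ac)

lemma quad_form_scale: "quad_form n (\<lambda>i j. c * A i j) z = c * quad_form n A z"
  unfolding quad_form_def by (simp add: sum_distrib_left mult_ac)

lemma quad_form_add: "quad_form n (\<lambda>i j. A i j + B i j) z = quad_form n A z + quad_form n B z"
  unfolding quad_form_def by (simp add: sum.distrib algebra_simps)

lemma quad_form_neg: "quad_form n (\<lambda>i j. - A i j) z = - quad_form n A z"
  using quad_form_scale[of n "-1" A z] by simp

lemma quad_form_diff: "quad_form n (\<lambda>i j. A i j - B i j) z = quad_form n A z - quad_form n B z"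
  unfolding quad_form_def by (simp add: sum_subtractf algebra_simps)

lemma trace_diff: "mat_trace n (\<lambda>i j. A i j - B i j) = mat_trace n A - mat_trace n B"
  unfolding mat_trace_def by (simp add: sum_subtractf)

lemma trace_neg: "mat_trace n (\<lambda>i j. - A i j) = - mat_trace n A"
  unfolding mat_trace_def by (simp add: sum_negf)

lemma fro2_neg: "fro2 n (\<lambda>i j. - A i j) = fro2 n A"
  unfolding fro2_def by simp

lemma gauss_sets:
  fixes f :: "(nat \<Rightarrow> real) \<Rightarrow> real"
  shows "f \<in> borel_measurable (std_gauss_vec n) \<Longrightarrow> {z \<in> space (std_gauss_vec n). t \<le> f z} \<in> sets (std_gauss_vec n)"
  unfolding borel_measurable_iff_ge by blast

lemma quad_meas_g: "(\<lambda>z. quad_form n A z - c) \<in> borel_measurable (std_gauss_vec n)"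
  unfolding std_gauss_vec_def by (intro borel_measurable_diff quad_meas borel_measurable_const) auto

lemma tail_one:
  fixes K F t :: real
  assumes K: "K > 0" and hq: "\<forall>u. \<bar>quad_form n A u\<bar> \<le> K * vsq n u"
    and F: "fro2 n A \<le> F" "F > 0" and t: "t \<ge> 0" "t * K \<le> F"
  shows "measure (std_gauss_vec n) {z \<in> space (std_gauss_vec n). t \<le> quad_form n A z - mat_trace n A}
          \<le> exp (- t\<^sup>2 / (16 * F))"
proof -
  define l where "l = t / (8 * F)"
  have l0: "l \<ge> 0" using t F by (simp add: l_def)
  have lK: "2 * l * K \<le> 1/4"
  proof -
    have "2 * l * K = (t * K) / (4 * F)" using F by (simp add: l_def field_simps)
    also have "\<dots> \<le> F / (4 * F)" using t F by (intro divide_right_mono) auto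
    also have "\<dots> = 1/4" using F by simp
    finally show ?thesis .
  qed
  define S where "S = (\<lambda>i j. (1/2) * A i j + (1/2) * A j i)"
  have qS: "quad_form n S z = quad_form n A z" for z
  proof -
    have "quad_form n S z = 1/2 * quad_form n A z + 1/2 * quad_form n (\<lambda>i j. A j i) z"
      unfolding S_def quad_form_add[of n "\<lambda>i j. 1/2 * A i j" "\<lambda>i j. 1/2 * A j i"]
        quad_form_scale[of n "1/2" A] quad_form_scale[of n "1/2" "\<lambda>i j. A j i"] ..
    then show ?thesis unfolding quad_form_transpose[of n A z] by simp
  qed
  have tS: "mat_trace n S = mat_trace n A" unfolding S_def mat_trace_def by simp
  have fS: "fro2 n S \<le> fro2 n A"
  proof -
    have "fro2 n S \<le> (\<Sum>i<n. \<Sum>j<n. ((A i j)\<^sup>2 + (A j i)\<^sup>2) / 2)"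
      unfolding fro2_def S_def
    proof (intro sum_mono)
      fix i j
      have "0 \<le> (A i j - A j i)\<^sup>2" by simp
      then show "((1/2) * A i j + (1/2) * A j i)\<^sup>2 \<le> ((A i j)\<^sup>2 + (A j i)\<^sup>2) / 2"
        by (simp add: power2_eq_square field_simps)
    qed
    also have "\<dots> = (fro2 n A + (\<Sum>i<n. \<Sum>j<n. (A j i)\<^sup>2)) / 2"
      unfolding fro2_def by (simp add: sum.distrib sum_divide_distrib add_divide_distrib)
    also have "(\<Sum>i<n. \<Sum>j<n. (A j i)\<^sup>2) = fro2 n A" unfolding fro2_def by (rule sum.swap)
    finally show ?thesis by simp
  qed
  define X where "X = (\<lambda>i j. (2 * l) * S i j)"
  have symX: "symm n X" unfolding symm_def X_def S_def by (simp add: add.commute)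
  have qX: "quad_form n X z = 2 * l * quad_form n A z" for z unfolding X_def quad_form_scale qS ..
  have HX: "\<forall>u. \<bar>quad_form n X u\<bar> \<le> vsq n u / 4"
  proof
    fix u
    have "\<bar>quad_form n X u\<bar> = 2 * l * \<bar>quad_form n A u\<bar>" unfolding qX using l0 by (simp add: abs_mult)
    also have "\<dots> \<le> 2 * l * (K * vsq n u)" using hq l0 by (intro mult_left_mono) auto
    also have "\<dots> = (2 * l * K) * vsq n u" by simp
    also have "\<dots> \<le> (1/4) * vsq n u" by (rule mult_right_mono[OF lK vsq_nonneg])
    finally show "\<bar>quad_form n X u\<bar> \<le> vsq n u / 4" by simp
  qed
  have "mat_trace n X = 2 * l * mat_trace n S" unfolding X_def mat_trace_def
    by (simp add: sum_distrib_left)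
  then have tX: "mat_trace n X = 2 * l * mat_trace n A" unfolding tS .
  have fX: "fro2 n X \<le> 4 * l\<^sup>2 * F"
  proof -
    have "fro2 n X = 4 * l\<^sup>2 * fro2 n S" unfolding X_def fro2_def
      by (simp add: sum_distrib_left power_mult_distrib)
    also have "\<dots> \<le> 4 * l\<^sup>2 * F" using fS F by (intro mult_left_mono) auto
    finally show ?thesis .
  qed
  have mgf: "(\<integral>\<^sup>+g. ennreal (exp (quad_form n X g / 2)) \<partial>std_gauss_vec n)
     \<le> ennreal (exp (l * mat_trace n A + 4 * l\<^sup>2 * F))"
  proof -
    have "(\<integral>\<^sup>+g. ennreal (exp (quad_form n X g / 2)) \<partial>std_gauss_vec n)
        \<le> ennreal (exp (mat_trace n X / 2 + fro2 n X))" by (rule mgf_core[OF symX HX])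
    also have "\<dots> \<le> ennreal (exp (l * mat_trace n A + 4 * l\<^sup>2 * F))"
      using fX unfolding tX by (intro ennreal_leI) simp
    finally show ?thesis .
  qed
  define E where "E = {z \<in> space (std_gauss_vec n). t \<le> quad_form n A z - mat_trace n A}"
  have Es: "E \<in> sets (std_gauss_vec n)" unfolding E_def by (rule gauss_sets[OF quad_meas_g])
  define c where "c = exp (- l * mat_trace n A - l * t)"
  have ind: "indicator E z \<le> ennreal (exp (quad_form n X z / 2)) * ennreal c" for z
  proof (cases "z \<in> E")
    case True
    then have "0 \<le> l * (quad_form n A z - mat_trace n A - t)" using l0 unfolding E_def by simp
    then have "1 \<le> exp (quad_form n X z / 2) * c"
      unfolding c_def qX exp_add[symmetric] by (simp add: algebra_simps)
    then show ?thesis using True by (simp add: ennreal_mult[symmetric] c_def)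
  qed simp
  have "emeasure (std_gauss_vec n) E = (\<integral>\<^sup>+z. indicator E z \<partial>std_gauss_vec n)"
    using Es by simp
  also have "\<dots> \<le> (\<integral>\<^sup>+z. ennreal (exp (quad_form n X z / 2)) * ennreal c \<partial>std_gauss_vec n)"
    by (intro nn_integral_mono ind)
  also have "\<dots> = (\<integral>\<^sup>+z. ennreal (exp (quad_form n X z / 2)) \<partial>std_gauss_vec n) * ennreal c"
  proof (rule nn_integral_multc)
    show "(\<lambda>z. ennreal (exp (quad_form n X z / 2))) \<in> borel_measurable (std_gauss_vec n)"
      unfolding std_gauss_vec_def by (rule exp_meas, rule quad_meas) auto
  qed
  also have "\<dots> \<le> ennreal (exp (l * mat_trace n A + 4 * l\<^sup>2 * F)) * ennreal c"
    by (rule mult_right_mono[OF mgf]) simp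
  also have "\<dots> = ennreal (exp (4 * l\<^sup>2 * F - l * t))"
    unfolding c_def by (simp add: ennreal_mult[symmetric] exp_add[symmetric] algebra_simps)
  also have "4 * l\<^sup>2 * F - l * t = - t\<^sup>2 / (16 * F)"
    using F by (simp add: l_def power2_eq_square field_simps)
  finally have em: "emeasure (std_gauss_vec n) E \<le> ennreal (exp (- t\<^sup>2 / (16 * F)))" .
  interpret prob_space "std_gauss_vec n" by (rule prob_gauss)
  have "ennreal (measure (std_gauss_vec n) E) \<le> ennreal (exp (- t\<^sup>2 / (16 * F)))"
    using em Es by (simp add: emeasure_eq_measure)
  then show ?thesis unfolding E_def[symmetric] by (simp add: ennreal_le_iff)
qed


lemma tail_two:
  fixes M t :: real
  assumes M: "M > 0" and op: "op_norm n A \<le> M" and n: "n \<ge> 1"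
    and t: "0 \<le> t" "t \<le> real n * M"
  shows "measure (std_gauss_vec n) {z \<in> space (std_gauss_vec n). t \<le> \<bar>quad_form n A z - mat_trace n A\<bar>}
          \<le> 2 * exp (- t\<^sup>2 / (16 * (real n * M\<^sup>2)))"
proof -
  interpret prob_space "std_gauss_vec n" by (rule prob_gauss)
  have op0: "0 \<le> op_norm n A" by (rule op_norm_nonneg)
  have hq: "\<forall>u. \<bar>quad_form n A u\<bar> \<le> M * vsq n u"
  proof
    fix u show "\<bar>quad_form n A u\<bar> \<le> M * vsq n u"
      using quad_op[of n A u] mult_right_mono[OF op vsq_nonneg[of n u]] by linarith
  qed
  have hq': "\<forall>u. \<bar>quad_form n (\<lambda>i j. - A i j) u\<bar> \<le> M * vsq n u"
    using hq unfolding quad_form_neg by simp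
  have F: "fro2 n A \<le> real n * M\<^sup>2"
  proof -
    have "(op_norm n A)\<^sup>2 \<le> M\<^sup>2" by (rule power_mono[OF op op0])
    then have "real n * (op_norm n A)\<^sup>2 \<le> real n * M\<^sup>2" by (intro mult_left_mono) auto
    then show ?thesis using fro2_op[of n A] by linarith
  qed
  have Fp: "real n * M\<^sup>2 > 0" using n M by simp
  have tK: "t * M \<le> real n * M\<^sup>2"
    using mult_right_mono[OF t(2), of M] M by (simp add: power2_eq_square mult_ac)
  have 1: "measure (std_gauss_vec n) {z \<in> space (std_gauss_vec n). t \<le> quad_form n A z - mat_trace n A}
     \<le> exp (- t\<^sup>2 / (16 * (real n * M\<^sup>2)))"
    by (rule tail_one[OF M hq F Fp t(1) tK])
  have 2: "measure (std_gauss_vec n) {z \<in> space (std_gauss_vec n). t \<le> quad_form n (\<lambda>i j. - A i j) z - mat_trace n (\<lambda>i j. - A i j)}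
     \<le> exp (- t\<^sup>2 / (16 * (real n * M\<^sup>2)))"
    by (rule tail_one[OF M hq' _ Fp t(1) tK]) (simp add: fro2_neg F)
  have sub: "{z \<in> space (std_gauss_vec n). t \<le> \<bar>quad_form n A z - mat_trace n A\<bar>}
     \<subseteq> {z \<in> space (std_gauss_vec n). t \<le> quad_form n A z - mat_trace n A}
       \<union> {z \<in> space (std_gauss_vec n). t \<le> quad_form n (\<lambda>i j. - A i j) z - mat_trace n (\<lambda>i j. - A i j)}"
    unfolding quad_form_neg trace_neg by auto
  have s1: "{z \<in> space (std_gauss_vec n). t \<le> quad_form n A z - mat_trace n A} \<in> events"
    by (rule gauss_sets[OF quad_meas_g])
  have s2: "{z \<in> space (std_gauss_vec n). t \<le> quad_form n (\<lambda>i j. - A i j) z - mat_trace n (\<lambda>i j. - A i j)} \<in> events"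
    by (rule gauss_sets[OF quad_meas_g])
  have "measure (std_gauss_vec n) {z \<in> space (std_gauss_vec n). t \<le> \<bar>quad_form n A z - mat_trace n A\<bar>}
     \<le> measure (std_gauss_vec n) ({z \<in> space (std_gauss_vec n). t \<le> quad_form n A z - mat_trace n A}
       \<union> {z \<in> space (std_gauss_vec n). t \<le> quad_form n (\<lambda>i j. - A i j) z - mat_trace n (\<lambda>i j. - A i j)})"
    by (rule finite_measure_mono[OF sub]) (use s1 s2 in auto)
  also have "\<dots> \<le> measure (std_gauss_vec n) {z \<in> space (std_gauss_vec n). t \<le> quad_form n A z - mat_trace n A}
       + measure (std_gauss_vec n) {z \<in> space (std_gauss_vec n). t \<le> quad_form n (\<lambda>i j. - A i j) z - mat_trace n (\<lambda>i j. - A i j)}"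
    by (rule measure_Un_le[OF s1 s2])
  finally show ?thesis using 1 2 by linarith
qed

lemma vsq_tail:
  assumes n: "n \<ge> 1"
  shows "measure (std_gauss_vec n) {z \<in> space (std_gauss_vec n). real n \<le> vsq n z - real n} \<le> exp (- real n / 16)"
proof -
  define I where "I = (\<lambda>(i::nat) (j::nat). if i = j then 1 else (0::real))"
  have qI: "quad_form n I z = vsq n z" for z
    unfolding quad_form_def vsq_def I_def
    by (simp add: if_distrib[of "\<lambda>x. _ * x"] if_distrib[of "\<lambda>x. x * _"] sum.delta power2_eq_square cong: if_cong)
  have tI: "mat_trace n I = real n" unfolding mat_trace_def I_def by simp
  have fI: "fro2 n I = real n" unfolding fro2_def I_def
    by (simp add: if_distrib[of "\<lambda>x. x\<^sup>2"] sum.delta cong: if_cong)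
  have hq: "\<forall>u. \<bar>quad_form n I u\<bar> \<le> 1 * vsq n u" unfolding qI using vsq_nonneg by simp
  have 1: "measure (std_gauss_vec n) {z \<in> space (std_gauss_vec n). real n \<le> quad_form n I z - mat_trace n I}
     \<le> exp (- (real n)\<^sup>2 / (16 * real n))"
    by (rule tail_one[OF _ hq]) (use n in \<open>auto simp: fI\<close>)
  have e: "- (real n)\<^sup>2 / (16 * real n) = - real n / 16" using n by (simp add: power2_eq_square)
  show ?thesis using 1 unfolding e qI tI .
qed

lemma floor_eq_diff: "\<lfloor>a\<rfloor> = \<lfloor>b\<rfloor> \<Longrightarrow> \<bar>a - b\<bar> < (1::real)"
proof -
  assume e: "\<lfloor>a\<rfloor> = \<lfloor>b\<rfloor>"
  have "real_of_int \<lfloor>a\<rfloor> \<le> a" "a < real_of_int \<lfloor>a\<rfloor> + 1"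
       "real_of_int \<lfloor>b\<rfloor> \<le> b" "b < real_of_int \<lfloor>b\<rfloor> + 1" by simp_all
  then show ?thesis using e by linarith
qed

lemma aux_lin1: "(c::real) - 1 < x \<Longrightarrow> 2 * c + 3 \<le> 2 * (x + 1) + 3" unfolding distrib_left by linarith

lemma cover:
  fixes \<Theta> :: "(real ^ 'm) set" and R :: real and n :: nat
  assumes R: "\<forall>\<theta>\<in>\<Theta>. norm \<theta> \<le> R" "0 \<le> R" and n: "n \<ge> 1"
  shows "\<exists>N. finite N \<and> N \<subseteq> \<Theta> \<and> real (card N) \<le> ((2 * R + 5) * real n) ^ CARD('m)
           \<and> (\<forall>\<theta>\<in>\<Theta>. \<exists>\<theta>'\<in>N. norm (\<theta> - \<theta>') \<le> real CARD('m) / real n)"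
proof -
  define r where "r = (\<lambda>\<theta>::real^'m. (\<lambda>i. \<lfloor>\<theta>$i * real n\<rfloor>))"
  define L where "L = \<lceil>R * real n\<rceil> + 1"
  have rb: "r \<theta> \<in> Pi\<^sub>E UNIV (\<lambda>_. {-L..L})" if "\<theta> \<in> \<Theta>" for \<theta>
  proof -
    have "r \<theta> i \<in> {-L..L}" for i
    proof -
      have a: "\<bar>\<theta>$i\<bar> \<le> R" using component_le_norm_cart[of \<theta> i] R that by fastforce
      have "\<bar>\<theta>$i * real n\<bar> \<le> R * real n" using mult_right_mono[OF a, of "real n"] by (simp add: abs_mult)
      then have b: "- (R * real n) \<le> \<theta>$i * real n" "\<theta>$i * real n \<le> R * real n" by linarith+
      have c: "R * real n \<le> real_of_int \<lceil>R * real n\<rceil>" by (rule le_of_int_ceiling)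
      have d: "real_of_int \<lfloor>\<theta>$i * real n\<rfloor> \<le> \<theta>$i * real n" "\<theta>$i * real n < real_of_int \<lfloor>\<theta>$i * real n\<rfloor> + 1"
        by simp_all
      have eL: "real_of_int L = real_of_int \<lceil>R * real n\<rceil> + 1" unfolding L_def by simp
      have g1: "- real_of_int L \<le> real_of_int \<lfloor>\<theta>$i * real n\<rfloor>" using b c d eL by linarith
      have g2: "real_of_int \<lfloor>\<theta>$i * real n\<rfloor> \<le> real_of_int L" using b c d eL by linarith
      have h1: "- L \<le> \<lfloor>\<theta>$i * real n\<rfloor>" using g1 by (simp only: of_int_minus[symmetric] of_int_le_iff)
      have h2: "\<lfloor>\<theta>$i * real n\<rfloor> \<le> L" using g2 by (simp only: of_int_le_iff)
      show ?thesis unfolding r_def using h1 h2 by simp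
    qed
    then show ?thesis by (simp add: PiE_UNIV_domain)
  qed
  define rep where "rep = (\<lambda>k. SOME \<theta>. \<theta> \<in> \<Theta> \<and> r \<theta> = k)"
  define N where "N = rep ` (r ` \<Theta>)"
  have sub: "r ` \<Theta> \<subseteq> Pi\<^sub>E UNIV (\<lambda>_. {-L..L})" using rb by auto
  have finPi: "finite (Pi\<^sub>E (UNIV::'m set) (\<lambda>_. {-L..L}))" by (intro finite_PiE) auto
  have fin: "finite (r ` \<Theta>)" by (rule finite_subset[OF sub finPi])
  have repP: "rep (r \<theta>) \<in> \<Theta> \<and> r (rep (r \<theta>)) = r \<theta>" if "\<theta> \<in> \<Theta>" for \<theta>
    unfolding rep_def by (rule someI_ex) (use that in auto)
  have NT: "N \<subseteq> \<Theta>" unfolding N_def using repP by auto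
  have cardN: "card N \<le> card (Pi\<^sub>E (UNIV::'m set) (\<lambda>_. {-L..L}))"
    unfolding N_def by (rule order_trans[OF card_image_le[OF fin] card_mono[OF finPi sub]])
  have cardPi: "card (Pi\<^sub>E (UNIV::'m set) (\<lambda>_. {-L..L})) = (nat (2 * L + 1)) ^ CARD('m)"
    by (simp add: card_PiE)
  have L1: "real (nat (2 * L + 1)) \<le> (2 * R + 5) * real n"
  proof -
    have "0 \<le> R * real n" using R by simp
    then have "L \<ge> 1" unfolding L_def by simp
    then have "real (nat (2 * L + 1)) = 2 * real_of_int \<lceil>R * real n\<rceil> + 3" unfolding L_def by simp
    also have "\<dots> \<le> 2 * (R * real n + 1) + 3" using ceiling_correct[of "R * real n", THEN conjunct1]
      by (rule aux_lin1)
    also have "\<dots> = 2 * R * real n + 5" by simp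
    also have "\<dots> \<le> (2 * R + 5) * real n" using n by (simp add: algebra_simps)
    finally show ?thesis .
  qed
  have "real (card N) \<le> real (nat (2 * L + 1)) ^ CARD('m)"
    using cardN unfolding cardPi by (metis of_nat_le_iff of_nat_power)
  also have "\<dots> \<le> ((2 * R + 5) * real n) ^ CARD('m)" by (rule power_mono[OF L1]) simp
  finally have cN: "real (card N) \<le> ((2 * R + 5) * real n) ^ CARD('m)" .
  have approx: "\<exists>\<theta>'\<in>N. norm (\<theta> - \<theta>') \<le> real CARD('m) / real n" if th: "\<theta> \<in> \<Theta>" for \<theta>
  proof (intro bexI)
    let ?t = "rep (r \<theta>)"
    show "?t \<in> N" unfolding N_def using th by auto
    have e: "r ?t = r \<theta>" using repP[OF th] by simp
    have ci: "\<bar>(\<theta> - ?t)$i\<bar> \<le> 1 / real n" for i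
    proof -
      have "\<lfloor>\<theta>$i * real n\<rfloor> = \<lfloor>?t$i * real n\<rfloor>" using fun_cong[OF e, of i] unfolding r_def by simp
      then have "\<bar>\<theta>$i * real n - ?t$i * real n\<bar> < 1" by (rule floor_eq_diff)
      then have "\<bar>(\<theta>$i - ?t$i)\<bar> * real n < 1" by (simp add: left_diff_distrib[symmetric] abs_mult)
      then have "\<bar>(\<theta>$i - ?t$i)\<bar> \<le> 1 / real n" using n by (simp add: field_simps)
      then show ?thesis by simp
    qed
    have "norm (\<theta> - ?t) \<le> (\<Sum>i\<in>UNIV. \<bar>(\<theta> - ?t)$i\<bar>)" by (rule norm_le_l1_cart)
    also have "\<dots> \<le> real CARD('m) * (1 / real n)" using sum_bounded_above[of UNIV "\<lambda>i. \<bar>(\<theta> - ?t)$i\<bar>" "1 / real n"] ci by simp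
    finally show "norm (\<theta> - ?t) \<le> real CARD('m) / real n" by simp
  qed
  show ?thesis using fin NT cN approx unfolding N_def by (intro exI[of _ N]) (auto simp: N_def)
qed

lemma increment:
  "\<bar>(quad_form n A z - mat_trace n A) - (quad_form n B z - mat_trace n B)\<bar>
     \<le> op_norm n (\<lambda>i j. A i j - B i j) * (vsq n z + real n)"
proof -
  have "\<bar>(quad_form n A z - mat_trace n A) - (quad_form n B z - mat_trace n B)\<bar>
      = \<bar>quad_form n (\<lambda>i j. A i j - B i j) z - mat_trace n (\<lambda>i j. A i j - B i j)\<bar>"
    unfolding quad_form_diff trace_diff by (simp add: algebra_simps)
  also have "\<dots> \<le> \<bar>quad_form n (\<lambda>i j. A i j - B i j) z\<bar> + \<bar>mat_trace n (\<lambda>i j. A i j - B i j)\<bar>"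
    by (rule abs_triangle_ineq4)
  also have "\<dots> \<le> op_norm n (\<lambda>i j. A i j - B i j) * vsq n z + real n * op_norm n (\<lambda>i j. A i j - B i j)"
    by (intro add_mono quad_op trace_op)
  also have "\<dots> = op_norm n (\<lambda>i j. A i j - B i j) * (vsq n z + real n)" by (simp add: algebra_simps)
  finally show ?thesis .
qed


lemma vsq_meas: "(\<lambda>z. vsq n z - c) \<in> borel_measurable (std_gauss_vec n)"
  unfolding vsq_def std_gauss_vec_def
  by (intro borel_measurable_diff borel_measurable_sum borel_measurable_power comp_meas borel_measurable_const) auto

lemma abs_Q_sets: "{z \<in> space (std_gauss_vec n). t \<le> \<bar>quad_form n A z - c\<bar>} \<in> sets (std_gauss_vec n)"
  by (rule gauss_sets[OF borel_measurable_abs[OF quad_meas_g]])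

lemma exp_neg_bound: "n \<ge> 1 \<Longrightarrow> exp (- real n / 16) \<le> 16 / real n"
proof -
  assume n: "n \<ge> 1"
  have "real n / 16 \<le> exp (real n / 16)" using exp_ge_add_one_self[of "real n / 16"] by linarith
  then have "real n / 16 * exp (- real n / 16) \<le> exp (real n / 16) * exp (- real n / 16)"
    by (intro mult_right_mono) auto
  also have "\<dots> = 1" by (simp add: exp_add[symmetric])
  finally have "real n * exp (- real n / 16) \<le> 16" by simp
  then show ?thesis using n by (simp add: field_simps)
qed

lemma exp_k_ln: "n \<ge> 1 \<Longrightarrow> exp (- (real k * ln (real n))) = 1 / real n ^ k"
proof -
  assume n: "n \<ge> 1"
  have "exp (real k * ln (real n)) = real n ^ k" using n by (simp add: exp_of_nat_mult)
  then show ?thesis by (simp add: exp_minus inverse_eq_divide)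
qed

lemma main_n:
  fixes \<Theta> :: "(real ^ 'm) set" and A :: "real ^ 'm \<Rightarrow> (nat \<Rightarrow> nat \<Rightarrow> real)"
  assumes M: "M > 0" and opM: "\<forall>\<theta>\<in>\<Theta>. op_norm n (A \<theta>) \<le> M"
    and C: "C > 0" "\<forall>\<theta>1\<in>\<Theta>. \<forall>\<theta>2\<in>\<Theta>. op_norm n (\<lambda>i j. A \<theta>2 i j - A \<theta>1 i j) \<le> C * norm (\<theta>2 - \<theta>1)"
    and R: "\<forall>\<theta>\<in>\<Theta>. norm \<theta> \<le> R" "0 \<le> R"
    and n: "n \<ge> 3"
    and C'def: "C' = 8 * M * sqrt (real (CARD('m) + 1))"
    and cdef: "c = C' * sqrt (real n * ln (real n))"
    and h2: "c / 2 \<le> real n * M"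
    and h3: "3 * C * real CARD('m) \<le> c / 4"
  shows "measure (std_gauss_vec n) {z \<in> space (std_gauss_vec n).
           (SUP \<theta>\<in>\<Theta>. ereal \<bar>quad_form n (A \<theta>) z - mat_trace n (A \<theta>)\<bar>) \<ge> ereal c}
         \<le> (2 * (2 * R + 5) ^ CARD('m) + 16) / real n"
proof -
  interpret prob_space "std_gauss_vec n" by (rule prob_gauss)
  define d where "d = CARD('m)"
  define k where "k = d + 1"
  define K where "K = (2 * R + 5) ^ d"
  have n1: "n \<ge> 1" using n by simp
  have nr: "real n > 0" using n by simp
  obtain N where N: "finite N" "N \<subseteq> \<Theta>" "real (card N) \<le> ((2 * R + 5) * real n) ^ d"
    "\<forall>\<theta>\<in>\<Theta>. \<exists>\<theta>'\<in>N. norm (\<theta> - \<theta>') \<le> real d / real n"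
    using cover[OF R n1] unfolding d_def by blast
  define Q where "Q = (\<lambda>\<theta> z. quad_form n (A \<theta>) z - mat_trace n (A \<theta>))"
  define t where "t = c / 2"
  have lnpos: "ln (real n) > 0" using n by simp
  have C'pos: "C' > 0" unfolding C'def using M by simp
  have cpos: "c > 0" unfolding cdef using C'pos lnpos nr by simp
  have t0: "0 \<le> t" using cpos by (simp add: t_def)
  have tM: "t \<le> real n * M" using h2 by (simp add: t_def)
  have tsq: "t\<^sup>2 / (16 * (real n * M\<^sup>2)) = real k * ln (real n)"
  proof -
    have sq1: "(sqrt (real n * ln (real n)))\<^sup>2 = real n * ln (real n)"
      using lnpos nr by (intro real_sqrt_pow2) simp
    have sq2: "(sqrt (real k))\<^sup>2 = real k" by simp
    have "t\<^sup>2 = (C')\<^sup>2 * (sqrt (real n * ln (real n)))\<^sup>2 / 4"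
      unfolding t_def cdef by (simp add: power_mult_distrib power_divide)
    also have "(C')\<^sup>2 = 64 * M\<^sup>2 * real k"
      unfolding C'def k_def[symmetric] d_def[symmetric] using sq2 by (simp add: power_mult_distrib)
    finally have "t\<^sup>2 = 16 * M\<^sup>2 * real k * (real n * ln (real n))" unfolding sq1 by simp
    then show ?thesis using M nr by (simp add: field_simps)
  qed
  define S where "S = (\<lambda>\<theta>'. {z \<in> space (std_gauss_vec n). t \<le> \<bar>Q \<theta>' z\<bar>})"
  define V where "V = {z \<in> space (std_gauss_vec n). real n \<le> vsq n z - real n}"
  have Ssets: "S \<theta>' \<in> events" for \<theta>' unfolding S_def Q_def by (rule abs_Q_sets)
  have Vsets: "V \<in> events" unfolding V_def by (rule gauss_sets[OF vsq_meas])
  have Sb: "measure (std_gauss_vec n) (S \<theta>') \<le> 2 * (1 / real n ^ k)" if "\<theta>' \<in> N" for \<theta>'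
  proof -
    have "\<theta>' \<in> \<Theta>" using that N(2) by auto
    then have "measure (std_gauss_vec n) (S \<theta>') \<le> 2 * exp (- t\<^sup>2 / (16 * (real n * M\<^sup>2)))"
      unfolding S_def Q_def using opM by (intro tail_two[OF M _ n1 t0 tM]) auto
    also have "- t\<^sup>2 / (16 * (real n * M\<^sup>2)) = - (real k * ln (real n))"
      using tsq by (simp add: minus_divide_left[symmetric])
    finally show ?thesis unfolding exp_k_ln[OF n1] .
  qed
  have Vb: "measure (std_gauss_vec n) V \<le> 16 / real n"
    unfolding V_def using vsq_tail[OF n1] exp_neg_bound[OF n1] by linarith
  define B where "B = (\<Union>\<theta>'\<in>N. S \<theta>') \<union> V"
  have USets: "(\<Union>\<theta>'\<in>N. S \<theta>') \<in> events" using N(1) Ssets by auto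
  have Bsets: "B \<in> events" unfolding B_def using USets Vsets by auto
  have "measure (std_gauss_vec n) (\<Union>\<theta>'\<in>N. S \<theta>') \<le> (\<Sum>\<theta>'\<in>N. measure (std_gauss_vec n) (S \<theta>'))"
    by (rule finite_measure_subadditive_finite[OF N(1)]) (use Ssets in auto)
  also have "\<dots> \<le> (\<Sum>\<theta>'\<in>N. 2 * (1 / real n ^ k))" by (rule sum_mono[OF Sb])
  also have "\<dots> = real (card N) * (2 * (1 / real n ^ k))" by simp
  also have "\<dots> \<le> ((2 * R + 5) * real n) ^ d * (2 * (1 / real n ^ k))"
    by (rule mult_right_mono[OF N(3)]) simp
  also have "\<dots> = 2 * K * (real n ^ d / real n ^ (Suc d))"
    unfolding K_def k_def power_mult_distrib by simp
  also have "real n ^ d / real n ^ (Suc d) = 1 / real n" using nr by simp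
  also have "2 * K * (1 / real n) = 2 * K / real n" by simp
  finally have Ub: "measure (std_gauss_vec n) (\<Union>\<theta>'\<in>N. S \<theta>') \<le> 2 * K / real n" .
  have Bb: "measure (std_gauss_vec n) B \<le> (2 * K + 16) / real n"
  proof -
    have "measure (std_gauss_vec n) B \<le> measure (std_gauss_vec n) (\<Union>\<theta>'\<in>N. S \<theta>') + measure (std_gauss_vec n) V"
      unfolding B_def by (rule measure_Un_le[OF USets Vsets])
    also have "\<dots> \<le> 2 * K / real n + 16 / real n" using Ub Vb by (rule add_mono)
    also have "\<dots> = (2 * K + 16) / real n" by (simp add: add_divide_distrib)
    finally show ?thesis .
  qed
  have sub: "{z \<in> space (std_gauss_vec n).
           (SUP \<theta>\<in>\<Theta>. ereal \<bar>quad_form n (A \<theta>) z - mat_trace n (A \<theta>)\<bar>) \<ge> ereal c} \<subseteq> B"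
  proof
    fix z assume z: "z \<in> {z \<in> space (std_gauss_vec n).
           (SUP \<theta>\<in>\<Theta>. ereal \<bar>quad_form n (A \<theta>) z - mat_trace n (A \<theta>)\<bar>) \<ge> ereal c}"
    show "z \<in> B"
    proof (rule ccontr)
      assume nB: "z \<notin> B"
      have zs: "z \<in> space (std_gauss_vec n)" using z by simp
      have smallN: "\<bar>Q \<theta>' z\<bar> < t" if "\<theta>' \<in> N" for \<theta>'
        using nB zs that unfolding B_def S_def by force
      have smallV: "vsq n z - real n < real n" using nB zs unfolding B_def V_def by force
      have each: "\<bar>Q \<theta> z\<bar> \<le> 3 * c / 4" if th: "\<theta> \<in> \<Theta>" for \<theta>
      proof -
        obtain \<theta>' where th': "\<theta>' \<in> N" "norm (\<theta> - \<theta>') \<le> real d / real n" using N(4) th by blast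
        have th'T: "\<theta>' \<in> \<Theta>" using th' N(2) by auto
        have opd: "op_norm n (\<lambda>i j. A \<theta> i j - A \<theta>' i j) \<le> C * (real d / real n)"
          using C(2) th th'T th'(2) C(1) by (meson mult_left_mono less_imp_le order_trans)
        have vz: "0 \<le> vsq n z + real n" "vsq n z + real n \<le> 3 * real n"
          using vsq_nonneg[of n z] smallV by linarith+
        have "\<bar>Q \<theta> z - Q \<theta>' z\<bar> \<le> op_norm n (\<lambda>i j. A \<theta> i j - A \<theta>' i j) * (vsq n z + real n)"
          unfolding Q_def by (rule increment)
        also have "\<dots> \<le> C * (real d / real n) * (3 * real n)"
          using opd vz op_norm_nonneg C(1) by (intro mult_mono) auto
        also have "\<dots> = 3 * C * real d" using nr by simp
        also have "\<dots> \<le> c / 4" using h3 unfolding d_def .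
        finally have inc: "\<bar>Q \<theta> z - Q \<theta>' z\<bar> \<le> c / 4" .
        have "\<bar>Q \<theta> z\<bar> \<le> \<bar>Q \<theta>' z\<bar> + \<bar>Q \<theta> z - Q \<theta>' z\<bar>" by linarith
        also have "\<dots> \<le> t + c / 4" using smallN[OF th'(1)] inc by linarith
        also have "\<dots> = 3 * c / 4" by (simp add: t_def)
        finally show ?thesis .
      qed
      have "(SUP \<theta>\<in>\<Theta>. ereal \<bar>quad_form n (A \<theta>) z - mat_trace n (A \<theta>)\<bar>) \<le> ereal (3 * c / 4)"
        unfolding SUP_le_iff using each unfolding Q_def by simp
      also have "ereal (3 * c / 4) < ereal c" using cpos by simp
      finally have lt: "(SUP \<theta>\<in>\<Theta>. ereal \<bar>quad_form n (A \<theta>) z - mat_trace n (A \<theta>)\<bar>) < ereal c" .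
      have zc: "ereal c \<le> (SUP \<theta>\<in>\<Theta>. ereal \<bar>quad_form n (A \<theta>) z - mat_trace n (A \<theta>)\<bar>)"
        using z by simp
      show False using leD[OF zc] lt by blast
    qed
  qed
  have "measure (std_gauss_vec n) {z \<in> space (std_gauss_vec n).
           (SUP \<theta>\<in>\<Theta>. ereal \<bar>quad_form n (A \<theta>) z - mat_trace n (A \<theta>)\<bar>) \<ge> ereal c} \<le> measure (std_gauss_vec n) B"
    by (rule finite_measure_mono[OF sub Bsets])
  also have "\<dots> \<le> (2 * K + 16) / real n" by (rule Bb)
  finally show ?thesis unfolding K_def d_def .
qed


lemma sqrt_nln: "n \<ge> 1 \<Longrightarrow> sqrt (real n * ln (real n)) = real n * sqrt (ln (real n) / real n)"
proof -
  assume n: "n \<ge> 1"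
  have "real n * ln (real n) = (real n)\<^sup>2 * (ln (real n) / real n)" using n by (simp add: power2_eq_square)
  then have "sqrt (real n * ln (real n)) = sqrt ((real n)\<^sup>2) * sqrt (ln (real n) / real n)"
    by (simp only: real_sqrt_mult)
  then show ?thesis by simp
qed

theorem proposition7:
  fixes \<Theta> :: "(real ^ 'm) set"
    and Pi_n :: "nat \<Rightarrow> real ^ 'm \<Rightarrow> (nat \<Rightarrow> nat \<Rightarrow> real)"
  assumes bdd: "bounded \<Theta>"
    and a: "\<exists>M. \<forall>n. \<forall>\<theta>\<in>\<Theta>. op_norm n (Pi_n n \<theta>) \<le> M"
    and b: "\<exists>C>0. \<forall>n. \<forall>\<theta>1\<in>\<Theta>. \<forall>\<theta>2\<in>\<Theta>.
              op_norm n (\<lambda>i j. Pi_n n \<theta>2 i j - Pi_n n \<theta>1 i j) \<le> C * norm (\<theta>2 - \<theta>1)"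
    and c: "\<forall>\<theta>\<in>\<Theta>. (\<lambda>n. op_norm n (Pi_n n \<theta>) / frob_norm n (Pi_n n \<theta>))
              \<in> o(\<lambda>n. 1 / sqrt (ln (real n)))"
  shows "\<exists>C'>0. (\<lambda>n. measure (std_gauss_vec n)
            {z \<in> space (std_gauss_vec n).
               (SUP \<theta>\<in>\<Theta>. ereal \<bar>quad_form n (Pi_n n \<theta>) z - mat_trace n (Pi_n n \<theta>)\<bar>)
                 \<ge> ereal (C' * sqrt (real n * ln (real n)))})
          \<longlonglongrightarrow> 0"
proof -
  obtain M0 where M0: "\<forall>n. \<forall>\<theta>\<in>\<Theta>. op_norm n (Pi_n n \<theta>) \<le> M0" using a by blast
  define M where "M = max M0 1"
  have Mpos: "M > 0" unfolding M_def by (simp add: less_max_iff_disj)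
  have opM: "\<forall>n. \<forall>\<theta>\<in>\<Theta>. op_norm n (Pi_n n \<theta>) \<le> M"
    using M0 unfolding M_def by (simp add: le_max_iff_disj)
  obtain C where C: "C > 0" "\<forall>n. \<forall>\<theta>1\<in>\<Theta>. \<forall>\<theta>2\<in>\<Theta>.
              op_norm n (\<lambda>i j. Pi_n n \<theta>2 i j - Pi_n n \<theta>1 i j) \<le> C * norm (\<theta>2 - \<theta>1)"
    using b by blast
  obtain R0 where R0: "\<forall>\<theta>\<in>\<Theta>. norm \<theta> \<le> R0" using bdd unfolding bounded_iff by blast
  define R where "R = max R0 0"
  have R: "\<forall>\<theta>\<in>\<Theta>. norm \<theta> \<le> R" "0 \<le> R" using R0 unfolding R_def by (auto simp: le_max_iff_disj)
  define C' where "C' = 8 * M * sqrt (real (CARD('m) + 1))"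
  have C'pos: "C' > 0" unfolding C'_def using Mpos by simp
  define K where "K = 2 * (2 * R + 5) ^ CARD('m) + 16"
  define cc where "cc = (\<lambda>n::nat. C' * sqrt (real n * ln (real n)))"
  define P where "P = (\<lambda>n. measure (std_gauss_vec n)
            {z \<in> space (std_gauss_vec n).
               (SUP \<theta>\<in>\<Theta>. ereal \<bar>quad_form n (Pi_n n \<theta>) z - mat_trace n (Pi_n n \<theta>)\<bar>)
                 \<ge> ereal (C' * sqrt (real n * ln (real n)))})"
  have ev1: "eventually (\<lambda>n. n \<ge> 3) sequentially" by (rule eventually_ge_at_top)
  have ev2: "eventually (\<lambda>n. cc n / 2 \<le> real n * M) sequentially"
  proof -
    have lim: "(\<lambda>n. sqrt (ln (real n) / real n)) \<longlonglongrightarrow> 0"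
      using tendsto_real_sqrt[OF lim_ln_over_n] by simp
    have "eventually (\<lambda>n. sqrt (ln (real n) / real n) < 2 * M / C') sequentially"
      by (rule order_tendstoD(2)[OF lim]) (use Mpos C'pos in simp)
    with ev1 show ?thesis
    proof (rule eventually_elim2)
      fix n :: nat assume n: "n \<ge> 3" and s: "sqrt (ln (real n) / real n) < 2 * M / C'"
      have sn: "sqrt (real n * ln (real n)) = real n * sqrt (ln (real n) / real n)"
        by (rule sqrt_nln) (use n in simp)
      have "cc n / 2 = C' / 2 * real n * sqrt (ln (real n) / real n)"
        unfolding cc_def sn by simp
      also have "\<dots> \<le> C' / 2 * real n * (2 * M / C')"
        using s C'pos by (intro mult_left_mono) auto
      also have "\<dots> = real n * M" using C'pos by simp
      finally show "cc n / 2 \<le> real n * M" .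
    qed
  qed
  have ev3: "eventually (\<lambda>n. 3 * C * real CARD('m) \<le> cc n / 4) sequentially"
  proof -
    define B where "B = 12 * C * real CARD('m) / C'"
    have B0: "B \<ge> 0" unfolding B_def using C C'pos by simp
    have "eventually (\<lambda>n. n \<ge> max 3 (nat \<lceil>B\<^sup>2\<rceil>)) sequentially" by (rule eventually_ge_at_top)
    then show ?thesis
    proof (rule eventually_mono)
      fix n :: nat assume n: "max 3 (nat \<lceil>B\<^sup>2\<rceil>) \<le> n"
      have n3: "n \<ge> 3" using n by simp
      have nB: "B\<^sup>2 \<le> real n" using n by linarith
      have ln1: "1 \<le> ln (real n)"
        using n3 exp_le by (subst ln_ge_iff) auto
      have "real n * 1 \<le> real n * ln (real n)" using ln1 by (intro mult_left_mono) auto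
      then have "real n \<le> real n * ln (real n)" by simp
      then have "B\<^sup>2 \<le> real n * ln (real n)" using nB by linarith
      then have "sqrt (B\<^sup>2) \<le> sqrt (real n * ln (real n))" by (rule real_sqrt_le_mono)
      then have sB: "B \<le> sqrt (real n * ln (real n))" using B0 by simp
      have "3 * C * real CARD('m) = C' * B / 4" unfolding B_def using C'pos by simp
      also have "\<dots> \<le> C' * sqrt (real n * ln (real n)) / 4" using sB C'pos by (simp add: divide_right_mono)
      finally show "3 * C * real CARD('m) \<le> cc n / 4" unfolding cc_def .
    qed
  qed
  have ev: "eventually (\<lambda>n. P n \<le> K / real n) sequentially"
    using ev1 ev2 ev3
  proof (eventually_elim)
    case (elim n)
    show ?case unfolding P_def K_def
      by (rule main_n[OF Mpos _ C(1) _ R elim(1) C'_def refl]) (use opM C(2) elim(2,3) in \<open>auto simp: cc_def\<close>)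
  qed
  have ev0: "eventually (\<lambda>n. 0 \<le> P n) sequentially" unfolding P_def by simp
  have limK: "(\<lambda>n. K / real n) \<longlonglongrightarrow> 0"
  proof -
    have "(\<lambda>n. K * (1 / real n)) \<longlonglongrightarrow> K * 0" by (intro tendsto_mult tendsto_const lim_1_over_n)
    then show ?thesis by simp
  qed
  have "P \<longlonglongrightarrow> 0" by (rule tendsto_sandwich[OF ev0 ev tendsto_const limK])
  then show ?thesis using C'pos unfolding P_def by blast
qed

end
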